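(* Let $E$ be finite, $\Omega=E^{\mathbb{Z}}$ with left shift $S$, and fix a letter $\mathtt a\in E$; write $\mathbf{a}$ for the configuration with all coordinates equal to $\mathtt a$. (i) If $\phi:\Omega\to\mathbb{R}$ is continuous with the extensibility property and $\rho^\phi$ denotes its cocycle $\rho^\phi(\xi,\eta)=\lim_{n\to\infty}\sum_{i=-n}^{n}[\phi(S^i\xi)-\phi(S^i\eta)]$ (defined for $\xi,\eta$ differing at finitely many sites), then the family $\gamma^\phi=(\gamma^\phi_\Lambda)_{\Lambda\subset\mathbb{Z}\text{ finite}}$ given by $$\gamma^\phi_\Lambda(\omega_\Lambda|\omega_{\Lambda^c})=\Big(\sum_{\xi_\Lambda\in E^\Lambda}e^{\rho^\phi(\xi_\Lambda\omega_{\mathbb{Z}\setminus\Lambda},\,\omega)}\Big)^{-1},\qquad\omega\in\Omega,$$ is a translation-invariant Gibbsian specification. (ii) If $\gamma=(\gamma_\Lambda)$ is a translation-invariant Gibbsian specification on $\Omega$, then $$\phi_\gamma(\omega)=\log\frac{\gamma_{\{0\}}(\omega_0\,|\,\mathbf a_{-\infty}^{-1}\omega_1^{\infty})}{\gamma_{\{0\}}(\mathtt a\,|\,\mathbf a_{-\infty}^{-1}\omega_1^{\infty})},\qquad\omega\in\Omega,$$ is a continuous function with the extensibility property and $\gamma^{\phi_\gamma}=\gamma$.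
   Context: $E$ finite, discrete; $\Omega=E^{\mathbb{Z}}$ with product topology; $(S\omega)_i=\omega_{i+1}$. For $\omega\in\Omega$, $a\in E$, $\omega^a$ is the configuration equal to $a$ at $0$ and $\omega_k$ at $k\ne0$. A continuous $\phi$ has the extensibility property if for all $a,\tilde a\in E$, $\sum_{i=-n}^{n}[\phi(S^i\omega^a)-\phi(S^i\omega^{\tilde a})]$ converges uniformly in $\omega$ as $n\to\infty$ (then the limit $\rho^\phi(\xi,\eta)$ exists for all $\xi,\eta$ differing at finitely many sites). $\mathbf a_{-\infty}^{-1}\omega_1^\infty$ denotes the condition on sites $\ne0$ equal to $\mathtt a$ at negative sites and to $\omega_k$ at sites $k\ge1$; for finite $\Lambda$, $\xi_\Lambda\omega_{\mathbb{Z}\setminus\Lambda}$ equals $\xi$ on $\Lambda$ and $\omega$ elsewhere. A specification is a family $(\gamma_\Lambda)_{\Lambda\text{ finite}}$ of probabilities $\gamma_\Lambda(\cdot|\omega_{\Lambda^c})$ on $E^\Lambda$ depending only on $\omega_{\Lambda^c}$, consistent: with $\gamma_\Lambda(f|\omega)=\sum_{\xi_\Lambda}\gamma_\Lambda(\xi_\Lambda|\omega_{\Lambda^c})f(\xi_\Lambda\omega_{\Lambda^c})$, for finite $\Delta\subset\Lambda$, $\sum_{\xi_\Lambda}\gamma_\Lambda(\xi_\Lambda|\omega_{\Lambda^c})\gamma_\Delta(f|\xi_\Lambda\omega_{\Lambda^c})=\gamma_\Lambda(f|\omega)$. Gibbsian means non-null ($\inf_\omega\gamma_\Lambda(\omega_\Lambda|\omega_{\Lambda^c})>0$)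 and continuous ($\omega\mapsto\gamma_\Lambda(\omega_\Lambda|\omega_{\Lambda^c})$ continuous) for every finite $\Lambda$. Translation-invariant means $\gamma_{\Lambda+1}(\omega_{\Lambda+1}|\omega_{(\Lambda+1)^c})=\gamma_\Lambda((S\omega)_\Lambda|(S\omega)_{\Lambda^c})$ for all finite $\Lambda$ and $\omega$. *)

theory Defs
  imports "HOL-Analysis.Analysis"
begin

definition conf_top :: "(int \<Rightarrow> 'e) topology" where
  "conf_top = product_topology (\<lambda>_. discrete_topology UNIV) UNIV"

definition cont_conf :: "((int \<Rightarrow> 'e) \<Rightarrow> real) \<Rightarrow> bool" where
  "cont_conf f \<longleftrightarrow> continuous_map conf_top euclideanreal f"

definition shift :: "int \<Rightarrow> (int \<Rightarrow> 'e) \<Rightarrow> (int \<Rightarrow> 'e)" where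
  "shift i w = (\<lambda>k. w (k + i))"

text \<open>Configurations agreeing with w outside Lambda (i.e. xi_Lambda w_(Lambda^c)).\<close>
definition configs_on :: "int set \<Rightarrow> (int \<Rightarrow> 'e) \<Rightarrow> (int \<Rightarrow> 'e) set" where
  "configs_on L w = {x. \<forall>k. k \<notin> L \<longrightarrow> x k = w k}"

definition partial_sum :: "((int \<Rightarrow> 'e) \<Rightarrow> real) \<Rightarrow> (int \<Rightarrow> 'e) \<Rightarrow> (int \<Rightarrow> 'e) \<Rightarrow> nat \<Rightarrow> real" where
  "partial_sum phi x y n = (\<Sum>i\<in>{- int n..int n}. phi (shift i x) - phi (shift i y))"

definition extensible :: "((int \<Rightarrow> 'e) \<Rightarrow> real) \<Rightarrow> bool" where
  "extensible phi \<longleftrightarrow> (\<forall>a b. uniformly_convergent_on UNIV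
      (\<lambda>n w. partial_sum phi (w(0 := a)) (w(0 := b)) n))"

definition rho :: "((int \<Rightarrow> 'e) \<Rightarrow> real) \<Rightarrow> (int \<Rightarrow> 'e) \<Rightarrow> (int \<Rightarrow> 'e) \<Rightarrow> real" where
  "rho phi x y = lim (partial_sum phi x y)"

text \<open>A is_specification is represented by gam :: int set => config => real, where
  gam L w stands for gamma_L(w_L | w_(L^c)); only finite L are meaningful.\<close>

definition spec_exp :: "(int set \<Rightarrow> (int \<Rightarrow> 'e) \<Rightarrow> real) \<Rightarrow> int set \<Rightarrow> ((int \<Rightarrow> 'e) \<Rightarrow> real) \<Rightarrow> (int \<Rightarrow> 'e) \<Rightarrow> real" where
  "spec_exp gam L f w = (\<Sum>x\<in>configs_on L w. gam L x * f x)"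

definition is_specification :: "(int set \<Rightarrow> (int \<Rightarrow> 'e::finite) \<Rightarrow> real) \<Rightarrow> bool" where
  "is_specification gam \<longleftrightarrow>
     (\<forall>L w. finite L \<longrightarrow> gam L w \<ge> 0) \<and>
     (\<forall>L w. finite L \<longrightarrow> (\<Sum>x\<in>configs_on L w. gam L x) = 1) \<and>
     (\<forall>L D f w. finite L \<longrightarrow> D \<subseteq> L \<longrightarrow>
        (\<Sum>x\<in>configs_on L w. gam L x * spec_exp gam D f x) = spec_exp gam L f w)"

definition gibbsian :: "(int set \<Rightarrow> (int \<Rightarrow> 'e) \<Rightarrow> real) \<Rightarrow> bool" where
  "gibbsian gam \<longleftrightarrow>
     (\<forall>L. finite L \<longrightarrow> (INF w. gam L w) > 0) \<and>
     (\<forall>L. finite L \<longrightarrow> cont_conf (gam L))"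

definition transl_inv :: "(int set \<Rightarrow> (int \<Rightarrow> 'e) \<Rightarrow> real) \<Rightarrow> bool" where
  "transl_inv gam \<longleftrightarrow> (\<forall>L w. finite L \<longrightarrow> gam ((\<lambda>i. i + 1) ` L) w = gam L (shift 1 w))"

definition gibbs_spec :: "((int \<Rightarrow> 'e) \<Rightarrow> real) \<Rightarrow> int set \<Rightarrow> (int \<Rightarrow> 'e) \<Rightarrow> real" where
  "gibbs_spec phi L w = inverse (\<Sum>x\<in>configs_on L w. exp (rho phi x w))"

text \<open>The boundary condition a_(-inf)^(-1) w_1^inf, with the value w_0 kept at site 0.\<close>
definition aleft :: "'e \<Rightarrow> (int \<Rightarrow> 'e) \<Rightarrow> (int \<Rightarrow> 'e)" where
  "aleft a w = (\<lambda>k. if k < 0 then a else w k)"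

definition phi_of_spec :: "'e \<Rightarrow> (int set \<Rightarrow> (int \<Rightarrow> 'e) \<Rightarrow> real) \<Rightarrow> (int \<Rightarrow> 'e) \<Rightarrow> real" where
  "phi_of_spec a gam w = ln (gam {0} (aleft a w) / gam {0} ((aleft a w)(0 := a)))"

end

theory Submission
  imports Defs
begin


definition agree :: "nat \<Rightarrow> (int \<Rightarrow> 'e) \<Rightarrow> (int \<Rightarrow> 'e) \<Rightarrow> bool" where
  "agree N x y \<longleftrightarrow> (\<forall>k. \<bar>k\<bar> \<le> int N \<longrightarrow> x k = y k)"

lemma agree_sym: "agree N x y \<Longrightarrow> agree N y x"
  by (simp add: agree_def)

lemma agree_mono: "agree N x y \<Longrightarrow> M \<le> N \<Longrightarrow> agree M x y"
  by (auto simp: agree_def)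

lemma agree_trans: "agree N x y \<Longrightarrow> agree N y z \<Longrightarrow> agree N x z"
  by (auto simp: agree_def)

lemma topspace_conf [simp]: "topspace conf_top = UNIV"
  by (simp add: conf_top_def PiE_UNIV_domain)

lemma finite_int_bound: "finite (F::int set) \<Longrightarrow> \<exists>N::nat. \<forall>i\<in>F. \<bar>i\<bar> \<le> int N"
proof (induction F rule: finite_induct)
  case empty then show ?case by auto
next
  case (insert x F)
  then obtain N where "\<forall>i\<in>F. \<bar>i\<bar> \<le> int N" by auto
  then show ?case
    by (intro exI[of _ "max N (nat \<bar>x\<bar>)"]) auto
qed

lemma cyl_open: "openin conf_top {y. agree N x y}"
proof -
  have eq: "{y. agree N x y} = PiE UNIV (\<lambda>k. if \<bar>k\<bar> \<le> int N then {x k} else UNIV)"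
    by (force simp: agree_def PiE_UNIV_domain Pi_iff split: if_splits)
  have "{i. (if \<bar>i\<bar> \<le> int N then {x i} else UNIV) \<noteq> UNIV} \<subseteq> {- int N..int N}"
    by (auto split: if_splits)
  then have "finite {i. (if \<bar>i\<bar> \<le> int N then {x i} else UNIV) \<noteq> (UNIV::'a set)}"
    using finite_subset by blast
  then show ?thesis
    unfolding eq conf_top_def by (subst openin_PiE_gen) auto
qed

lemma open_cyl:
  assumes "openin conf_top U" "x \<in> U"
  shows "\<exists>N. {y. agree N x y} \<subseteq> U"
proof -
  obtain V where V: "finite {i. V i \<noteq> UNIV}" "x \<in> PiE UNIV V" "PiE UNIV V \<subseteq> U"
    using assms unfolding conf_top_def openin_product_topology_alt by force
  obtain N where N: "\<forall>i\<in>{i. V i \<noteq> UNIV}. \<bar>i\<bar> \<le> int N"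
    using finite_int_bound[OF V(1)] by blast
  have "{y. agree N x y} \<subseteq> PiE UNIV V"
  proof
    fix y assume "y \<in> {y. agree N x y}"
    have "y i \<in> V i" for i
    proof (cases "V i = UNIV")
      case False
      then have "\<bar>i\<bar> \<le> int N" using N by auto
      then have "y i = x i" using \<open>y \<in> {y. agree N x y}\<close> by (auto simp: agree_def)
      then show ?thesis using V(2) by (auto simp: PiE_UNIV_domain)
    qed auto
    then show "y \<in> PiE UNIV V" by (auto simp: PiE_UNIV_domain)
  qed
  then show ?thesis using V(3) by blast
qed

lemma cont_local:
  "cont_conf f \<longleftrightarrow> (\<forall>x e. e > 0 \<longrightarrow> (\<exists>N. \<forall>y. agree N x y \<longrightarrow> \<bar>f y - f x\<bar> < e))"
proof
  assume c: "cont_conf f"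
  show "\<forall>x e. e > 0 \<longrightarrow> (\<exists>N. \<forall>y. agree N x y \<longrightarrow> \<bar>f y - f x\<bar> < e)"
  proof (intro allI impI)
    fix x and e :: real assume e: "e > 0"
    have "openin conf_top {y \<in> topspace conf_top. f y \<in> {f x - e <..< f x + e}}"
      using c unfolding cont_conf_def by (intro openin_continuous_map_preimage) auto
    then obtain N where "{y. agree N x y} \<subseteq> {y. f y \<in> {f x - e <..< f x + e}}"
      using open_cyl[of _ x] e by fastforce
    then show "\<exists>N. \<forall>y. agree N x y \<longrightarrow> \<bar>f y - f x\<bar> < e"
      by (intro exI[of _ N]) (auto simp: abs_less_iff)
  qed
next
  assume L: "\<forall>x e. e > 0 \<longrightarrow> (\<exists>N. \<forall>y. agree N x y \<longrightarrow> \<bar>f y - f x\<bar> < e)"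
  show "cont_conf f"
    unfolding cont_conf_def continuous_map
  proof (intro conjI allI impI)
    fix U :: "real set" assume "openin euclideanreal U"
    then have oU: "open U" by simp
    show "openin conf_top {x \<in> topspace conf_top. f x \<in> U}"
    proof (subst openin_subopen, intro ballI)
      fix x assume "x \<in> {x \<in> topspace conf_top. f x \<in> U}"
      then have "f x \<in> U" by simp
      then obtain e where e: "e > 0" "ball (f x) e \<subseteq> U"
        using oU open_contains_ball by blast
      then obtain N where N: "\<forall>y. agree N x y \<longrightarrow> \<bar>f y - f x\<bar> < e" using L by blast
      have "{y. agree N x y} \<subseteq> {x \<in> topspace conf_top. f x \<in> U}"
        using N e by (auto simp: dist_real_def abs_minus_commute)
      moreover have "x \<in> {y. agree N x y}" by (simp add: agree_def)
      ultimately show "\<exists>T. openin conf_top T \<and> x \<in> T \<and> T \<subseteq> {x \<in> topspace conf_top. f x \<in> U}"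
        using cyl_open by blast
    qed
  qed auto
qed

lemma compact_conf: "compact_space (conf_top :: (int \<Rightarrow> 'e::finite) topology)"
  unfolding conf_top_def
  by (simp add: compact_space_product_topology compact_space_discrete_topology)

lemma cont_unif:
  fixes f :: "(int \<Rightarrow> 'e::finite) \<Rightarrow> real"
  assumes "cont_conf f" "e > 0"
  shows "\<exists>N. \<forall>x y. agree N x y \<longrightarrow> \<bar>f x - f y\<bar> < e"
proof -
  have "\<forall>x. \<exists>N. \<forall>y. agree N x y \<longrightarrow> \<bar>f y - f x\<bar> < e/2"
    using assms cont_local[of f] by (meson half_gt_zero)
  then obtain N where N: "\<And>x y. agree (N x) x y \<Longrightarrow> \<bar>f y - f x\<bar> < e/2" by metis
  let ?U = "(\<lambda>x. {y. agree (N x) x y}) ` UNIV"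
  have "\<forall>U\<in>?U. openin conf_top U" using cyl_open by blast
  moreover have "topspace conf_top \<subseteq> \<Union>?U" by (auto simp: agree_def)
  ultimately obtain F where F: "finite F" "F \<subseteq> ?U" "topspace conf_top \<subseteq> \<Union>F"
    using compact_conf[unfolded compact_space_alt, rule_format, of ?U] by blast
  then obtain X0 where X0: "finite X0" "F = (\<lambda>x. {y. agree (N x) x y}) ` X0"
    by (meson finite_subset_image)
  define M where "M = Max (insert 0 (N ` X0))"
  have NM: "x0 \<in> X0 \<Longrightarrow> N x0 \<le> M" for x0 using X0 unfolding M_def by auto
  show ?thesis
  proof (intro exI[of _ M] allI impI)
    fix x y :: "int \<Rightarrow> 'e" assume a: "agree M x y"
    have "x \<in> \<Union>F" using F(3) by auto
    then obtain x0 where x0: "x0 \<in> X0" "agree (N x0) x0 x" using X0(2) by auto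
    have "agree (N x0) x0 y" using agree_trans[OF x0(2) agree_mono[OF a NM[OF x0(1)]]] .
    then show "\<bar>f x - f y\<bar> < e" using N[OF x0(2)] N[of x0 y] by linarith
  qed
qed

lemma cont_bounded:
  fixes f :: "(int \<Rightarrow> 'e::finite) \<Rightarrow> real"
  assumes "cont_conf f"
  shows "\<exists>B. \<forall>x. \<bar>f x\<bar> \<le> B"
proof -
  have "compactin euclideanreal (f ` topspace conf_top)"
    using assms compact_conf unfolding cont_conf_def compact_space_def
    by (rule image_compactin[rotated])
  then have "bounded (range f)" by (simp add: compact_imp_bounded)
  then show ?thesis by (auto simp: bounded_real)
qed



definition loc :: "((int \<Rightarrow> 'e) \<Rightarrow> (int \<Rightarrow> 'f)) \<Rightarrow> bool" where
  "loc g \<longleftrightarrow> (\<forall>N. \<exists>M. \<forall>x y. agree M x y \<longrightarrow> agree N (g x) (g y))"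

lemma cont_comp:
  assumes "cont_conf f" "loc g"
  shows "cont_conf (\<lambda>x. f (g x))"
  unfolding cont_local
proof (intro allI impI)
  fix x and e :: real assume "e > 0"
  then obtain N where N: "\<forall>y. agree N (g x) y \<longrightarrow> \<bar>f y - f (g x)\<bar> < e"
    using assms(1) cont_local by blast
  obtain M where "\<forall>x y. agree M x y \<longrightarrow> agree N (g x) (g y)" using assms(2) loc_def by blast
  then show "\<exists>N. \<forall>y. agree N x y \<longrightarrow> \<bar>f (g y) - f (g x)\<bar> < e" using N by blast
qed

definition mrg :: "int set \<Rightarrow> (int \<Rightarrow> 'e) \<Rightarrow> (int \<Rightarrow> 'e) \<Rightarrow> (int \<Rightarrow> 'e)" where
  "mrg L z w = (\<lambda>k. if k \<in> L then z k else w k)"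

definition cut :: "'e \<Rightarrow> int \<Rightarrow> (int \<Rightarrow> 'e) \<Rightarrow> (int \<Rightarrow> 'e)" where
  "cut a i w = (\<lambda>k. if k < i then a else w k)"

lemma loc_shift: "loc (shift i)"
  unfolding loc_def
proof
  fix N
  show "\<exists>M. \<forall>x y. agree M x y \<longrightarrow> agree N (shift i x) (shift i y)"
    by (intro exI[of _ "N + nat \<bar>i\<bar>"]) (auto simp: agree_def shift_def)
qed

lemma loc_upd: "loc (\<lambda>v. v(j := b))"
  unfolding loc_def by (auto simp: agree_def)

lemma loc_merge: "loc (mrg L z)"
  unfolding loc_def by (auto simp: agree_def mrg_def)

lemma loc_cut: "loc (cut a i)"
  unfolding loc_def
proof
  fix N
  show "\<exists>M. \<forall>x y. agree M x y \<longrightarrow> agree N (cut a i x) (cut a i y)"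
    by (intro exI[of _ N]) (auto simp: agree_def cut_def)
qed

lemma loc_aleft: "loc (aleft a)"
  unfolding loc_def
proof
  fix N
  show "\<exists>M. \<forall>x y. agree M x y \<longrightarrow> agree N (aleft a x) (aleft a y)"
    by (intro exI[of _ N]) (auto simp: agree_def aleft_def)
qed

lemma loc_comp: "loc f \<Longrightarrow> loc g \<Longrightarrow> loc (\<lambda>x. f (g x))"
  unfolding loc_def by metis

lemma loc_id: "loc (\<lambda>x. x)"
  unfolding loc_def by metis

lemma cont_add: "cont_conf f \<Longrightarrow> cont_conf g \<Longrightarrow> cont_conf (\<lambda>x. f x + g x)"
  unfolding cont_conf_def by (rule continuous_map_add)

lemma cont_diff: "cont_conf f \<Longrightarrow> cont_conf g \<Longrightarrow> cont_conf (\<lambda>x. f x - g x)"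
  unfolding cont_conf_def by (rule continuous_map_diff)

lemma cont_sum: "finite I \<Longrightarrow> (\<And>i. i \<in> I \<Longrightarrow> cont_conf (\<lambda>x. f x i)) \<Longrightarrow> cont_conf (\<lambda>x. sum (f x) I)"
  unfolding cont_conf_def by (rule continuous_map_sum)

lemma cont_inverse: "cont_conf f \<Longrightarrow> (\<And>x. f x \<noteq> 0) \<Longrightarrow> cont_conf (\<lambda>x. inverse (f x))"
  unfolding cont_conf_def by (rule continuous_map_real_inverse) auto

lemma cont_exp: "cont_conf f \<Longrightarrow> cont_conf (\<lambda>x. exp (f x))"
proof -
  assume "cont_conf f"
  moreover have "continuous_on UNIV (exp :: real \<Rightarrow> real)" by (intro continuous_intros)
  ultimately show ?thesis unfolding cont_conf_def
    using continuous_map_compose[of conf_top euclideanreal f euclideanreal exp]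
    by (simp add: o_def)
qed

lemma cont_ln:
  assumes "cont_conf f" "\<And>x. f x > 0"
  shows "cont_conf (\<lambda>x. ln (f x))"
proof -
  have "continuous_map conf_top (top_of_set {0<..}) f"
    using assms unfolding cont_conf_def by (auto simp: continuous_map_in_subtopology)
  moreover have "continuous_map (top_of_set {0<..}) euclideanreal (ln :: real \<Rightarrow> real)"
    by (simp add: continuous_on_ln)
  ultimately show ?thesis unfolding cont_conf_def
    using continuous_map_compose[of conf_top "top_of_set {0<..}" f euclideanreal ln]
    by (simp add: o_def)
qed

definition ucs :: "(nat \<Rightarrow> 'a \<Rightarrow> real) \<Rightarrow> bool" where
  "ucs F \<longleftrightarrow> (\<forall>e>0. \<exists>N. \<forall>m\<ge>N. \<forall>n\<ge>N. \<forall>w. \<bar>F m w - F n w\<bar> < e)"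

lemma ucs_add:
  assumes "ucs F" "ucs G"
  shows "ucs (\<lambda>n w. F n w + G n w)"
  unfolding ucs_def
proof (intro allI impI)
  fix e :: real assume "e > 0"
  then obtain N1 N2 where N: "\<forall>m\<ge>N1. \<forall>n\<ge>N1. \<forall>w. \<bar>F m w - F n w\<bar> < e/2"
      "\<forall>m\<ge>N2. \<forall>n\<ge>N2. \<forall>w. \<bar>G m w - G n w\<bar> < e/2"
    using assms unfolding ucs_def by (meson half_gt_zero)
  then show "\<exists>N. \<forall>m\<ge>N. \<forall>n\<ge>N. \<forall>w. \<bar>F m w + G m w - (F n w + G n w)\<bar> < e"
  proof (intro exI[of _ "max N1 N2"] allI impI)
    fix m n w assume "m \<ge> max N1 N2" "n \<ge> max N1 N2"
    then have "\<bar>F m w - F n w\<bar> < e/2" "\<bar>G m w - G n w\<bar> < e/2"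
      using N by auto
    then show "\<bar>F m w + G m w - (F n w + G n w)\<bar> < e" by linarith
  qed
qed

lemma ucs_comp: "ucs F \<Longrightarrow> ucs (\<lambda>n w. F n (g w))"
  unfolding ucs_def by blast

lemma ucs_const: "ucs (\<lambda>n w. c w)"
  unfolding ucs_def by auto

lemma ucs_case:
  fixes h :: "'a \<Rightarrow> 'e::finite"
  assumes "\<And>c. ucs (G c)"
  shows "ucs (\<lambda>n w. G (h w) n w)"
  unfolding ucs_def
proof (intro allI impI)
  fix e :: real assume "e > 0"
  then have "\<forall>c. \<exists>N. \<forall>m\<ge>N. \<forall>n\<ge>N. \<forall>w. \<bar>G c m w - G c n w\<bar> < e"
    using assms unfolding ucs_def by blast
  then obtain N where N: "\<And>c m n w. m \<ge> N c \<Longrightarrow> n \<ge> N c \<Longrightarrow> \<bar>G c m w - G c n w\<bar> < e"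
    by metis
  define M where "M = Max (range N)"
  have "N c \<le> M" for c unfolding M_def by simp
  then show "\<exists>N. \<forall>m\<ge>N. \<forall>n\<ge>N. \<forall>w. \<bar>G (h w) m w - G (h w) n w\<bar> < e"
    using N by (meson order_trans)
qed

lemma ucs_close:
  assumes "ucs F" "\<And>e. e > 0 \<Longrightarrow> \<exists>N. \<forall>n\<ge>N. \<forall>w. \<bar>G n w - F n w\<bar> \<le> e"
  shows "ucs G"
  unfolding ucs_def
proof (intro allI impI)
  fix e :: real assume "e > 0"
  then obtain N1 where N1: "\<forall>m\<ge>N1. \<forall>n\<ge>N1. \<forall>w. \<bar>F m w - F n w\<bar> < e/3"
    using assms unfolding ucs_def by (meson divide_pos_pos zero_less_numeral)
  obtain N2 where N2: "\<forall>n\<ge>N2. \<forall>w. \<bar>G n w - F n w\<bar> \<le> e/3"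
    using assms(2)[of "e/3"] \<open>e > 0\<close> by auto
  show "\<exists>N. \<forall>m\<ge>N. \<forall>n\<ge>N. \<forall>w. \<bar>G m w - G n w\<bar> < e"
  proof (intro exI[of _ "max N1 N2"] allI impI)
    fix m n w assume "m \<ge> max N1 N2" "n \<ge> max N1 N2"
    then have "\<bar>F m w - F n w\<bar> < e/3" "\<bar>G m w - F m w\<bar> \<le> e/3" "\<bar>G n w - F n w\<bar> \<le> e/3"
      using N1 N2 by auto
    then show "\<bar>G m w - G n w\<bar> < e" by linarith
  qed
qed

lemma ucs_conv:
  assumes "ucs F"
  shows "(\<lambda>n. F n w) \<longlonglongrightarrow> lim (\<lambda>n. F n w)"
proof -
  have "Cauchy (\<lambda>n. F n w)"
    unfolding Cauchy_def dist_real_def using assms unfolding ucs_def by meson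
  then show ?thesis using Cauchy_convergent_iff convergent_LIMSEQ_iff by blast
qed

lemma ucs_bound:
  assumes "ucs F" "e > 0"
  shows "\<exists>N. \<forall>n\<ge>N. \<forall>w. \<bar>F n w - lim (\<lambda>n. F n w)\<bar> \<le> e"
proof -
  obtain N where N: "\<forall>m\<ge>N. \<forall>n\<ge>N. \<forall>w. \<bar>F m w - F n w\<bar> < e"
    using assms unfolding ucs_def by blast
  show ?thesis
  proof (intro exI[of _ N] allI impI)
    fix n w assume n: "n \<ge> N"
    have "(\<lambda>m. \<bar>F n w - F m w\<bar>) \<longlonglongrightarrow> \<bar>F n w - lim (\<lambda>n. F n w)\<bar>"
      by (intro tendsto_intros ucs_conv assms(1))
    moreover have "\<forall>\<^sub>F m in sequentially. \<bar>F n w - F m w\<bar> \<le> e"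
      using N n unfolding eventually_sequentially by (meson less_imp_le)
    ultimately show "\<bar>F n w - lim (\<lambda>n. F n w)\<bar> \<le> e"
      by (rule tendsto_upperbound) simp
  qed
qed

lemma ucs_cont:
  assumes "ucs F" "\<And>n. cont_conf (F n)"
  shows "cont_conf (\<lambda>w. lim (\<lambda>n. F n w))"
  unfolding cont_local
proof (intro allI impI)
  fix x and e :: real assume e: "e > 0"
  obtain N where N: "\<forall>n\<ge>N. \<forall>w. \<bar>F n w - lim (\<lambda>n. F n w)\<bar> \<le> e/3"
    using ucs_bound[OF assms(1), of "e/3"] e by auto
  obtain M where M: "\<forall>y. agree M x y \<longrightarrow> \<bar>F N y - F N x\<bar> < e/3"
    using assms(2)[of N] e cont_local[of "F N"] by (meson divide_pos_pos zero_less_numeral)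
  show "\<exists>M. \<forall>y. agree M x y \<longrightarrow> \<bar>lim (\<lambda>n. F n y) - lim (\<lambda>n. F n x)\<bar> < e"
  proof (intro exI[of _ M] allI impI)
    fix y assume "agree M x y"
    then have "\<bar>F N y - F N x\<bar> < e/3" using M by blast
    moreover have "\<bar>F N y - lim (\<lambda>n. F n y)\<bar> \<le> e/3" "\<bar>F N x - lim (\<lambda>n. F n x)\<bar> \<le> e/3"
      using N by auto
    ultimately show "\<bar>lim (\<lambda>n. F n y) - lim (\<lambda>n. F n x)\<bar> < e" by linarith
  qed
qed

lemma ucs_iff_unif: "ucs F \<longleftrightarrow> uniformly_convergent_on UNIV F"
  unfolding uniformly_convergent_eq_Cauchy uniformly_Cauchy_on_def ucs_def dist_real_def
  by blast



lemma sum_small: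
  fixes T :: "int \<Rightarrow> real"
  assumes "finite S" "\<forall>m\<in>S. \<bar>T m\<bar> \<le> e"
  shows "\<bar>sum T S\<bar> \<le> real (card S) * e"
proof -
  have "\<bar>sum T S\<bar> \<le> sum (\<lambda>m. \<bar>T m\<bar>) S" by (rule sum_abs)
  also have "\<dots> \<le> sum (\<lambda>m. e) S" using assms(2) by (intro sum_mono) auto
  finally show ?thesis by simp
qed

lemma window:
  fixes T :: "'a \<Rightarrow> int \<Rightarrow> real" and d :: int
  assumes small: "\<And>e. e > 0 \<Longrightarrow> \<exists>K::nat. \<forall>u m. \<bar>m\<bar> \<ge> int K \<longrightarrow> \<bar>T u m\<bar> \<le> e"
    and e: "e > 0"
  shows "\<exists>N. \<forall>n\<ge>N. \<forall>u. \<bar>(\<Sum>m\<in>{- int n + d..int n + d}. T u m) - (\<Sum>m\<in>{- int n..int n}. T u m)\<bar> \<le> e"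
proof -
  define e' where "e' = e / (4 * \<bar>real_of_int d\<bar> + 1)"
  have e': "e' > 0" using e unfolding e'_def by (simp add: add_nonneg_pos)
  obtain K where K: "\<forall>u m. \<bar>m\<bar> \<ge> int K \<longrightarrow> \<bar>T u m\<bar> \<le> e'" using small e' by blast
  show ?thesis
  proof (intro exI[of _ "K + nat \<bar>d\<bar> + 1"] allI impI)
    fix n u assume n: "n \<ge> K + nat \<bar>d\<bar> + 1"
    define r where "r = int n - \<bar>d\<bar>"
    have r: "r \<ge> int K + 1" using n unfolding r_def by linarith
    let ?A = "{- int n + d..int n + d}" and ?B = "{- int n..int n}" and ?I = "{-r..r}"
    have IA: "?I \<subseteq> ?A" and IB: "?I \<subseteq> ?B" unfolding r_def by auto
    have c1: "card ?A = nat (2 * int n + 1)" "card ?B = nat (2 * int n + 1)" "card ?I = nat (2 * r + 1)"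
      by simp_all
    have ar: "nat (2 * int n + 1) - nat (2 * r + 1) = nat (2 * \<bar>d\<bar>)"
      using r unfolding r_def by (simp add: right_diff_distrib nat_diff_distrib[symmetric])
    have "card (?A - ?I) = card ?A - card ?I" by (rule card_Diff_subset[OF _ IA]) simp
    then have cA: "card (?A - ?I) = nat (2 * \<bar>d\<bar>)"
      by (simp only: c1 ar)
    have "card (?B - ?I) = card ?B - card ?I" by (rule card_Diff_subset[OF _ IB]) simp
    then have cB: "card (?B - ?I) = nat (2 * \<bar>d\<bar>)"
      by (simp only: c1 ar)
    have smA: "\<forall>m\<in>?A - ?I. \<bar>T u m\<bar> \<le> e'" using K r by auto
    have smB: "\<forall>m\<in>?B - ?I. \<bar>T u m\<bar> \<le> e'" using K r by auto
    have sA: "sum (T u) ?A = sum (T u) (?A - ?I) + sum (T u) ?I"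
      by (rule sum.subset_diff[OF IA]) simp
    have sB: "sum (T u) ?B = sum (T u) (?B - ?I) + sum (T u) ?I"
      by (rule sum.subset_diff[OF IB]) simp
    have bA: "\<bar>sum (T u) (?A - ?I)\<bar> \<le> 2 * \<bar>real_of_int d\<bar> * e'"
      using sum_small[OF _ smA] cA by simp
    have bB: "\<bar>sum (T u) (?B - ?I)\<bar> \<le> 2 * \<bar>real_of_int d\<bar> * e'"
      using sum_small[OF _ smB] cB by simp
    have "4 * \<bar>real_of_int d\<bar> * e' \<le> e"
    proof -
      have "(4 * \<bar>real_of_int d\<bar>) * e' \<le> (4 * \<bar>real_of_int d\<bar> + 1) * e'"
        using e' by (intro mult_right_mono) auto
      also have "\<dots> = e" unfolding e'_def by (simp add: add_nonneg_pos)
      finally show ?thesis .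
    qed
    then show "\<bar>sum (T u) ?A - sum (T u) ?B\<bar> \<le> e"
      using sA sB bA bB by linarith
  qed
qed

lemma sum_shift_int:
  fixes a b d :: int
  shows "(\<Sum>i\<in>{a..b}. g (i + d)) = (\<Sum>m\<in>{a + d..b + d}. (g m :: real))"
  by (rule sum.reindex_bij_witness[of _ "\<lambda>m. m - d" "\<lambda>i. i + d"]) auto

lemma shift_shift: "shift i (shift j x) = shift (i + j) x"
  by (auto simp: shift_def add.commute add.left_commute)

lemma shift_zero [simp]: "shift 0 x = x"
  by (simp add: shift_def)

lemma partial_sum_add:
  "partial_sum phi x y n + partial_sum phi y z n = partial_sum phi x z n"
  unfolding partial_sum_def by (simp add: sum.distrib[symmetric])

lemma partial_sum_self [simp]: "partial_sum phi x x n = 0"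
  unfolding partial_sum_def by simp

definition fd :: "(int \<Rightarrow> 'e) \<Rightarrow> (int \<Rightarrow> 'e) \<Rightarrow> bool" where
  "fd x y \<longleftrightarrow> finite {k. x k \<noteq> y k}"

lemma merge_fd: "fd x y \<Longrightarrow> mrg {k. x k \<noteq> y k} x y = x"
  by (auto simp: mrg_def)

context
  fixes phi :: "(int \<Rightarrow> 'e::finite) \<Rightarrow> real"
  assumes cphi: "cont_conf phi" and ephi: "extensible phi"
begin

lemma far_small:
  assumes "fd x y"
  shows "\<And>e. e > 0 \<Longrightarrow> \<exists>K::nat. \<forall>(u::unit) m. \<bar>m\<bar> \<ge> int K \<longrightarrow>
     \<bar>phi (shift m x) - phi (shift m y)\<bar> \<le> e"
proof -
  fix e :: real assume "e > 0"
  obtain N where N: "\<forall>x y. agree N x y \<longrightarrow> \<bar>phi x - phi y\<bar> < e" using cont_unif[OF cphi \<open>e>0\<close>] by blast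
  obtain K0 where K0: "\<forall>i\<in>{k. x k \<noteq> y k}. \<bar>i\<bar> \<le> int K0"
    using finite_int_bound assms unfolding fd_def by blast
  show "\<exists>K::nat. \<forall>(u::unit) m. \<bar>m\<bar> \<ge> int K \<longrightarrow> \<bar>phi (shift m x) - phi (shift m y)\<bar> \<le> e"
  proof (intro exI[of _ "N + K0 + 1"] allI impI)
    fix m :: int and u :: unit assume m: "\<bar>m\<bar> \<ge> int (N + K0 + 1)"
    have "agree N (shift m x) (shift m y)"
      unfolding agree_def shift_def
    proof (intro allI impI)
      fix k assume "\<bar>k\<bar> \<le> int N"
      then have "\<bar>k + m\<bar> > int K0" using m by linarith
      then show "x (k + m) = y (k + m)" using K0 by force
    qed
    then show "\<bar>phi (shift m x) - phi (shift m y)\<bar> \<le> e" using N by force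
  qed
qed

lemma site0_small:
  "\<And>e. e > 0 \<Longrightarrow> \<exists>K::nat. \<forall>u m. \<bar>m\<bar> \<ge> int K \<longrightarrow>
     \<bar>phi (shift m (u(0 := b))) - phi (shift m (u(0 := c)))\<bar> \<le> e"
proof -
  fix e :: real assume "e > 0"
  obtain N where N: "\<forall>x y. agree N x y \<longrightarrow> \<bar>phi x - phi y\<bar> < e" using cont_unif[OF cphi \<open>e>0\<close>] by blast
  show "\<exists>K::nat. \<forall>u m. \<bar>m\<bar> \<ge> int K \<longrightarrow> \<bar>phi (shift m (u(0 := b))) - phi (shift m (u(0 := c)))\<bar> \<le> e"
  proof (intro exI[of _ "N + 1"] allI impI)
    fix m :: int and u :: "int \<Rightarrow> 'e" assume m: "\<bar>m\<bar> \<ge> int (N + 1)"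
    have "agree N (shift m (u(0 := b))) (shift m (u(0 := c)))"
      unfolding agree_def shift_def
    proof (intro allI impI)
      fix k assume "\<bar>k\<bar> \<le> int N"
      then have "k + m \<noteq> 0" using m by linarith
      then show "(u(0 := b)) (k + m) = (u(0 := c)) (k + m)" by simp
    qed
    then show "\<bar>phi (shift m (u(0 := b))) - phi (shift m (u(0 := c)))\<bar> \<le> e" using N by force
  qed
qed

lemma ucs_site0: "ucs (\<lambda>n u. partial_sum phi (u(0 := b)) (u(0 := c)) n)"
  using ephi unfolding extensible_def ucs_iff_unif by blast

lemma ucs_site: "ucs (\<lambda>n v. partial_sum phi (v(j := b)) (v(j := c)) n)"
proof -
  define h where "h u m = phi (shift m (u(0 := b))) - phi (shift m (u(0 := c)))" for u m
  have eq: "partial_sum phi (v(j := b)) (v(j := c)) n =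
      (\<Sum>m\<in>{- int n + - j..int n + - j}. h (shift j v) m)" for v n
  proof -
    have "shift i (v(j := e)) = shift (i - j) ((shift j v)(0 := e))" for i and e :: 'e
      by (auto simp: shift_def)
    then have "partial_sum phi (v(j := b)) (v(j := c)) n = (\<Sum>i\<in>{- int n..int n}. h (shift j v) (i + - j))"
      unfolding partial_sum_def h_def by simp
    also have "\<dots> = (\<Sum>m\<in>{- int n + - j..int n + - j}. h (shift j v) m)"
      by (rule sum_shift_int)
    finally show ?thesis .
  qed
  have u0: "ucs (\<lambda>n u. \<Sum>m\<in>{- int n..int n}. h u m)"
    using ucs_site0[of b c] unfolding partial_sum_def h_def by simp
  have "ucs (\<lambda>n u. \<Sum>m\<in>{- int n + - j..int n + - j}. h u m)"
    apply (rule ucs_close[OF u0])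
    apply (rule window)
    using site0_small unfolding h_def by auto
  from ucs_comp[OF this, of "shift j"] show ?thesis
    unfolding eq by simp
qed

lemma ucs_site': "ucs (\<lambda>n v. partial_sum phi (v(j := b)) v n)"
proof -
  have "ucs (\<lambda>n v. (\<lambda>c n v. partial_sum phi (v(j := b)) (v(j := c)) n) (v j) n v)"
    by (rule ucs_case) (rule ucs_site)
  then show ?thesis by simp
qed

lemma ucs_merge:
  assumes "finite L"
  shows "ucs (\<lambda>n w. partial_sum phi (mrg L z w) w n)"
  using assms
proof (induction L rule: finite_induct)
  case empty
  then show ?case by (simp add: mrg_def ucs_const)
next
  case (insert j L)
  have m: "mrg (insert j L) z w = (mrg L z w)(j := z j)" for w
    by (auto simp: mrg_def)
  have "ucs (\<lambda>n w. partial_sum phi ((mrg L z w)(j := z j)) (mrg L z w) n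
                 + partial_sum phi (mrg L z w) w n)"
    by (intro ucs_add insert.IH ucs_comp[OF ucs_site'[of j "z j"], of "mrg L z"])
  then show ?case unfolding m partial_sum_add .
qed

lemma rho_conv:
  assumes "fd x y"
  shows "partial_sum phi x y \<longlonglongrightarrow> rho phi x y"
proof -
  have "(\<lambda>n. partial_sum phi (mrg {k. x k \<noteq> y k} x y) y n) \<longlonglongrightarrow>
      lim (\<lambda>n. partial_sum phi (mrg {k. x k \<noteq> y k} x y) y n)"
    by (rule ucs_conv[OF ucs_merge]) (use assms in \<open>simp add: fd_def\<close>)
  then show ?thesis unfolding merge_fd[OF assms] rho_def by simp
qed

lemma fd_trans: "fd x y \<Longrightarrow> fd y z \<Longrightarrow> fd x z"
  unfolding fd_def
  by (rule finite_subset[of _ "{k. x k \<noteq> y k} \<union> {k. y k \<noteq> z k}"]) auto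

lemma rho_cocycle:
  assumes "fd x y" "fd y z"
  shows "rho phi x z = rho phi x y + rho phi y z"
proof -
  have "(\<lambda>n. partial_sum phi x y n + partial_sum phi y z n) \<longlonglongrightarrow> rho phi x y + rho phi y z"
    by (intro tendsto_add rho_conv assms)
  then have "partial_sum phi x z \<longlonglongrightarrow> rho phi x y + rho phi y z"
    unfolding partial_sum_add .
  moreover have "partial_sum phi x z \<longlonglongrightarrow> rho phi x z"
    by (intro rho_conv fd_trans[OF assms])
  ultimately show ?thesis using LIMSEQ_unique by blast
qed

lemma rho_self [simp]: "rho phi x x = 0"
proof -
  have "partial_sum phi x x = (\<lambda>n. 0)" by (simp add: fun_eq_iff)
  then show ?thesis unfolding rho_def by (simp add: limI)
qed

lemma rho_shift:
  assumes "fd x y"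
  shows "rho phi (shift 1 x) (shift 1 y) = rho phi x y"
proof -
  define t where "t m = phi (shift m x) - phi (shift m y)" for m
  have eq: "partial_sum phi (shift 1 x) (shift 1 y) n = (\<Sum>m\<in>{- int n + 1..int n + 1}. t m)" for n
  proof -
    have "partial_sum phi (shift 1 x) (shift 1 y) n = (\<Sum>i\<in>{- int n..int n}. t (i + 1))"
      unfolding partial_sum_def t_def by (simp add: shift_shift)
    also have "\<dots> = (\<Sum>m\<in>{- int n + 1..int n + 1}. t m)" by (rule sum_shift_int)
    finally show ?thesis .
  qed
  have ps: "partial_sum phi x y n = (\<Sum>m\<in>{- int n..int n}. t m)" for n
    unfolding partial_sum_def t_def by simp
  have "(\<lambda>n. (\<Sum>m\<in>{- int n + 1..int n + 1}. (\<lambda>u::unit. t) () m) - (\<Sum>m\<in>{- int n..int n}. (\<lambda>u::unit. t) () m)) \<longlonglongrightarrow> 0"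
  proof (rule LIMSEQ_I)
    fix r :: real assume "r > 0"
    then have "r/2 > 0" by simp
    from window[of "\<lambda>u::unit. t", OF _ this, of 1] far_small[OF assms] obtain N where
      N: "\<forall>n\<ge>N. \<forall>u. \<bar>(\<Sum>m\<in>{- int n + 1..int n + 1}. t m) - (\<Sum>m\<in>{- int n..int n}. t m)\<bar> \<le> r/2"
      unfolding t_def by blast
    then show "\<exists>no. \<forall>n\<ge>no. norm ((\<Sum>m\<in>{- int n + 1..int n + 1}. (\<lambda>u::unit. t) () m) - (\<Sum>m\<in>{- int n..int n}. (\<lambda>u::unit. t) () m) - 0) < r"
      using \<open>r > 0\<close> by (intro exI[of _ N]) force
  qed
  then have "(\<lambda>n. (partial_sum phi (shift 1 x) (shift 1 y) n - partial_sum phi x y n) + partial_sum phi x y n) \<longlonglongrightarrow> 0 + rho phi x y"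
    unfolding eq ps by (intro tendsto_add rho_conv[OF assms, unfolded ps[abs_def]]) simp
  then have "partial_sum phi (shift 1 x) (shift 1 y) \<longlonglongrightarrow> rho phi x y" by simp
  then show ?thesis unfolding rho_def by (rule limI)
qed

lemma rho_merge_cont:
  assumes "finite L"
  shows "cont_conf (\<lambda>w. rho phi (mrg L z w) w)"
proof -
  have "cont_conf (\<lambda>w. lim (\<lambda>n. partial_sum phi (mrg L z w) w n))"
  proof (rule ucs_cont[OF ucs_merge[OF assms]])
    fix n
    show "cont_conf (\<lambda>w. partial_sum phi (mrg L z w) w n)"
      unfolding partial_sum_def
      by (intro cont_sum cont_diff cont_comp[OF cphi] loc_comp[OF loc_shift] loc_merge loc_id) auto
  qed
  then show ?thesis unfolding rho_def by (simp add: fun_eq_iff)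
qed

end



lemma configs_img:
  "configs_on L w = (\<lambda>z. mrg L z w) ` PiE L (\<lambda>_. UNIV)"
proof (intro set_eqI iffI)
  fix x assume x: "x \<in> configs_on L w"
  have "x = mrg L (restrict x L) w"
    using x by (auto simp: mrg_def configs_on_def fun_eq_iff)
  then show "x \<in> (\<lambda>z. mrg L z w) ` PiE L (\<lambda>_. UNIV)" by auto
qed (auto simp: mrg_def configs_on_def)

lemma configs_inj: "inj_on (\<lambda>z. mrg L z w) (PiE L (\<lambda>_. UNIV))"
proof (rule inj_onI)
  fix z z' assume z: "z \<in> PiE L (\<lambda>_. UNIV)" "z' \<in> PiE L (\<lambda>_. UNIV)"
    and e: "mrg L z w = mrg L z' w"
  show "z = z'"
  proof (rule PiE_ext[OF z])
    fix i assume "i \<in> L" then show "z i = z' i" using e by (auto simp: mrg_def fun_eq_iff dest: spec[of _ i])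
  qed
qed

lemma configs_sum:
  "sum g (configs_on L w) = (\<Sum>z\<in>PiE L (\<lambda>_. UNIV). g (mrg L z w))"
  unfolding configs_img by (subst sum.reindex[OF configs_inj]) (simp add: o_def)

lemma configs_finite: "finite L \<Longrightarrow> finite (configs_on L (w :: int \<Rightarrow> 'e::finite))"
  unfolding configs_img by (intro finite_imageI finite_PiE) auto

lemma configs_self [simp]: "w \<in> configs_on L w"
  by (simp add: configs_on_def)

lemma configs_same: "x \<in> configs_on L w \<Longrightarrow> configs_on L x = configs_on L w"
  by (auto simp: configs_on_def)

lemma configs_sym: "z \<in> configs_on D x \<longleftrightarrow> x \<in> configs_on D z"
  by (auto simp: configs_on_def)

lemma configs_sub: "x \<in> configs_on L w \<Longrightarrow> D \<subseteq> L \<Longrightarrow> configs_on D x \<subseteq> configs_on L w"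
  by (auto simp: configs_on_def)

lemma configs_fd: "finite L \<Longrightarrow> x \<in> configs_on L w \<Longrightarrow> fd x w"
  unfolding fd_def configs_on_def by (rule finite_subset[of _ L]) auto

lemma consistency_abs:
  fixes gam :: "int set \<Rightarrow> (int \<Rightarrow> 'e::finite) \<Rightarrow> real"
  assumes L: "finite L" and DL: "D \<subseteq> L"
    and norm: "\<And>x. (\<Sum>y\<in>configs_on D x. gam D y) = 1"
    and db: "\<And>x z. x \<in> configs_on L w \<Longrightarrow> z \<in> configs_on D x \<Longrightarrow> gam L x * gam D z = gam L z * gam D x"
  shows "(\<Sum>x\<in>configs_on L w. gam L x * spec_exp gam D f x) = spec_exp gam L f w"
proof -
  let ?A = "configs_on L w"
  have fA: "finite ?A" using configs_finite[OF L] .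
  have restr: "(\<Sum>z\<in>configs_on D x. g z) = (\<Sum>z\<in>?A. if z \<in> configs_on D x then g z else 0)"
    if "x \<in> ?A" for x and g :: "_ \<Rightarrow> real"
  proof -
    have "configs_on D x = ?A \<inter> configs_on D x" using configs_sub[OF that DL] by blast
    then have "sum g (configs_on D x) = sum g (?A \<inter> configs_on D x)" by (rule arg_cong)
    also have "\<dots> = (\<Sum>z\<in>?A. if z \<in> configs_on D x then g z else 0)"
      by (rule sum.inter_restrict[OF fA])
    finally show ?thesis .
  qed
  have "(\<Sum>x\<in>?A. gam L x * spec_exp gam D f x) = (\<Sum>x\<in>?A. \<Sum>z\<in>configs_on D x. gam L x * gam D z * f z)"
    unfolding spec_exp_def by (simp add: sum_distrib_left mult.assoc)
  also have "\<dots> = (\<Sum>x\<in>?A. \<Sum>z\<in>configs_on D x. gam L z * gam D x * f z)"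
    using db by (intro sum.cong refl) auto
  also have "\<dots> = (\<Sum>x\<in>?A. \<Sum>z\<in>?A. if z \<in> configs_on D x then gam L z * gam D x * f z else 0)"
    by (intro sum.cong refl restr)
  also have "\<dots> = (\<Sum>z\<in>?A. \<Sum>x\<in>?A. if z \<in> configs_on D x then gam L z * gam D x * f z else 0)"
    by (rule sum.swap)
  also have "\<dots> = (\<Sum>z\<in>?A. \<Sum>x\<in>configs_on D z. gam L z * gam D x * f z)"
  proof (rule sum.cong[OF refl])
    fix z assume z: "z \<in> ?A"
    have "(\<Sum>x\<in>?A. if z \<in> configs_on D x then gam L z * gam D x * f z else 0)
        = (\<Sum>x\<in>?A. if x \<in> configs_on D z then gam L z * gam D x * f z else 0)"
      by (simp add: configs_sym)
    also have "\<dots> = (\<Sum>x\<in>configs_on D z. gam L z * gam D x * f z)"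
      by (rule restr[OF z, symmetric])
    finally show "(\<Sum>x\<in>?A. if z \<in> configs_on D x then gam L z * gam D x * f z else 0)
        = (\<Sum>x\<in>configs_on D z. gam L z * gam D x * f z)" .
  qed
  also have "\<dots> = (\<Sum>z\<in>?A. gam L z * f z * (\<Sum>x\<in>configs_on D z. gam D x))"
    by (simp add: sum_distrib_left mult_ac)
  also have "\<dots> = spec_exp gam L f w" unfolding spec_exp_def norm by simp
  finally show ?thesis .
qed

context
  fixes phi :: "(int \<Rightarrow> 'e::finite) \<Rightarrow> real"
  assumes cphi: "cont_conf phi" and ephi: "extensible phi"
begin

definition ZZ :: "int set \<Rightarrow> (int \<Rightarrow> 'e) \<Rightarrow> real" where
  "ZZ L w = (\<Sum>x\<in>configs_on L w. exp (rho phi x w))"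

lemma ZZ_pos: "finite L \<Longrightarrow> ZZ L w > 0"
  unfolding ZZ_def
  by (rule sum_pos2[of _ w]) (auto simp: configs_finite)

lemma gs_formula:
  assumes L: "finite L" and x: "x \<in> configs_on L w"
  shows "gibbs_spec phi L x = exp (rho phi x w) / ZZ L w"
proof -
  have "(\<Sum>z\<in>configs_on L x. exp (rho phi z x)) = (\<Sum>z\<in>configs_on L w. exp (- rho phi x w) * exp (rho phi z w))"
    unfolding configs_same[OF x]
  proof (intro sum.cong refl)
    fix z assume z: "z \<in> configs_on L w"
    have "rho phi z w = rho phi z x + rho phi x w"
      using rho_cocycle[OF cphi ephi, of z x w] configs_fd[OF L x] configs_fd[OF L z]
      by (metis configs_fd configs_same configs_self L x z)
    then show "exp (rho phi z x) = exp (- rho phi x w) * exp (rho phi z w)"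
      by (simp add: exp_add[symmetric])
  qed
  also have "\<dots> = exp (- rho phi x w) * ZZ L w" unfolding ZZ_def by (simp add: sum_distrib_left)
  finally show ?thesis unfolding gibbs_spec_def by (simp add: exp_minus inverse_mult_distrib divide_inverse mult.commute)
qed

lemma gs_pos: "finite L \<Longrightarrow> gibbs_spec phi L w > 0"
  using gs_formula[of L w w] ZZ_pos by simp

lemma gs_norm: "finite L \<Longrightarrow> (\<Sum>x\<in>configs_on L w. gibbs_spec phi L x) = 1"
proof -
  assume L: "finite L"
  have "(\<Sum>x\<in>configs_on L w. gibbs_spec phi L x) = (\<Sum>x\<in>configs_on L w. exp (rho phi x w) / ZZ L w)"
    using gs_formula[OF L] by simp
  also have "\<dots> = 1" using ZZ_pos[OF L, of w] unfolding ZZ_def sum_divide_distrib[symmetric] by simp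
  finally show ?thesis .
qed

lemma gs_db:
  assumes L: "finite L" and DL: "D \<subseteq> L" and x: "x \<in> configs_on L w" and z: "z \<in> configs_on D x"
  shows "gibbs_spec phi L x * gibbs_spec phi D z = gibbs_spec phi L z * gibbs_spec phi D x"
proof -
  have D: "finite D" using L DL finite_subset by blast
  have zL: "z \<in> configs_on L w" using configs_sub[OF x DL] z by blast
  have c: "rho phi z w = rho phi z x + rho phi x w"
    using rho_cocycle[OF cphi ephi] configs_fd[OF D z] configs_fd[OF L x] by blast
  show ?thesis
    using gs_formula[OF L x] gs_formula[OF L zL] gs_formula[OF D z] gs_formula[OF D configs_self[of x D]]
    by (simp add: c exp_add rho_self[OF cphi ephi])
qed

lemma gs_spec: "is_specification (gibbs_spec phi)"
  unfolding is_specification_def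
proof (intro conjI allI impI)
  fix L :: "int set" and w :: "int \<Rightarrow> 'e" assume "finite L" then show "gibbs_spec phi L w \<ge> 0" using gs_pos less_imp_le by blast
next
  fix L :: "int set" and w :: "int \<Rightarrow> 'e" assume "finite L" then show "(\<Sum>x\<in>configs_on L w. gibbs_spec phi L x) = 1" by (rule gs_norm)
next
  fix L D :: "int set" and f :: "(int \<Rightarrow> 'e) \<Rightarrow> real" and w :: "int \<Rightarrow> 'e" assume L: "finite L" and DL: "D \<subseteq> L"
  have D: "finite D" using L DL finite_subset by blast
  show "(\<Sum>x\<in>configs_on L w. gibbs_spec phi L x * spec_exp (gibbs_spec phi) D f x) = spec_exp (gibbs_spec phi) L f w"
    by (rule consistency_abs[OF L DL gs_norm[OF D] gs_db[OF L DL]])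
qed

lemma gs_gibbsian: "gibbsian (gibbs_spec phi)"
  unfolding gibbsian_def
proof (intro conjI allI impI)
  fix L :: "int set" assume L: "finite L"
  let ?P = "PiE L (\<lambda>_. UNIV :: 'e set)"
  have eq: "gibbs_spec phi L w = inverse (\<Sum>z\<in>?P. exp (rho phi (mrg L z w) w))" for w
    unfolding gibbs_spec_def configs_sum ..
  have fP: "finite ?P" using L by (intro finite_PiE) auto
  have "\<forall>z. \<exists>B. \<forall>w. \<bar>rho phi (mrg L z w) w\<bar> \<le> B"
    using cont_bounded[OF rho_merge_cont[OF cphi ephi L]] by blast
  then obtain B where B: "\<And>z w. \<bar>rho phi (mrg L z w) w\<bar> \<le> B z" by metis
  define K where "K = (\<Sum>z\<in>?P. exp (B z))"
  have lb: "gibbs_spec phi L w \<ge> inverse K" for w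
  proof -
    have pos: "0 < (\<Sum>z\<in>?P. exp (rho phi (mrg L z w) w))"
      using ZZ_pos[OF L, of w] unfolding ZZ_def configs_sum .
    have "(\<Sum>z\<in>?P. exp (rho phi (mrg L z w) w)) \<le> K"
      unfolding K_def using B by (intro sum_mono) (meson abs_le_D1 exp_le_cancel_iff)
    then show ?thesis unfolding eq using pos by (simp add: le_imp_inverse_le)
  qed
  have Kpos: "K > 0"
    using ZZ_pos[OF L, of undefined] unfolding K_def
    by (intro sum_pos) (auto simp: fP PiE_eq_empty_iff)
  have "inverse K \<le> (INF w. gibbs_spec phi L w)"
    by (rule cINF_greatest) (use lb in auto)
  then show "(INF w. gibbs_spec phi L w) > 0" using Kpos by (meson inverse_positive_iff_positive less_le_trans)
next
  fix L :: "int set" assume L: "finite L"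
  let ?P = "PiE L (\<lambda>_. UNIV :: 'e set)"
  have fP: "finite ?P" using L by (intro finite_PiE) auto
  have eq: "gibbs_spec phi L = (\<lambda>w. inverse (\<Sum>z\<in>?P. exp (rho phi (mrg L z w) w)))"
    unfolding gibbs_spec_def configs_sum ..
  show "cont_conf (gibbs_spec phi L)"
    unfolding eq
  proof (rule cont_inverse)
    show "cont_conf (\<lambda>w. \<Sum>z\<in>?P. exp (rho phi (mrg L z w) w))"
      by (intro cont_sum fP cont_exp rho_merge_cont[OF cphi ephi L])
  next
    fix w show "(\<Sum>z\<in>?P. exp (rho phi (mrg L z w) w)) \<noteq> 0"
      using ZZ_pos[OF L, of w] unfolding ZZ_def configs_sum by simp
  qed
qed

lemma gs_transl: "transl_inv (gibbs_spec phi)"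
  unfolding transl_inv_def
proof (intro allI impI)
  fix L :: "int set" and w :: "int \<Rightarrow> 'e" assume L: "finite L"
  have L1: "finite ((\<lambda>i. i + 1) ` L)" using L by simp
  have "(\<Sum>x\<in>configs_on ((\<lambda>i. i + 1) ` L) w. exp (rho phi x w)) =
        (\<Sum>y\<in>configs_on L (shift 1 w). exp (rho phi y (shift 1 w)))"
  proof (rule sum.reindex_bij_witness[of _ "shift (-1)" "shift 1"])
    fix x assume x: "x \<in> configs_on ((\<lambda>i. i + 1) ` L) w"
    show "shift (-1) (shift 1 x) = x" by (simp add: shift_shift)
    show "shift 1 x \<in> configs_on L (shift 1 w)"
      unfolding configs_on_def shift_def
    proof (intro CollectI allI impI)
      fix k assume "k \<notin> L"
      then have "k + 1 \<notin> (\<lambda>i. i + 1) ` L" by auto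
      then show "x (k + 1) = w (k + 1)" using x unfolding configs_on_def by blast
    qed
    show "exp (rho phi (shift 1 x) (shift 1 w)) = exp (rho phi x w)"
      using rho_shift[OF cphi ephi configs_fd[OF L1 x]] by simp
  next
    fix y assume y: "y \<in> configs_on L (shift 1 w)"
    show "shift 1 (shift (-1) y) = y" by (simp add: shift_shift)
    show "shift (-1) y \<in> configs_on ((\<lambda>i. i + 1) ` L) w"
      unfolding configs_on_def shift_def
    proof (intro CollectI allI impI)
      fix k assume "k \<notin> (\<lambda>i. i + 1) ` L"
      then have "k - 1 \<notin> L" by force
      then show "y (k + - 1) = w k" using y unfolding configs_on_def shift_def by force
    qed
  qed
  then show "gibbs_spec phi ((\<lambda>i. i + 1) ` L) w = gibbs_spec phi L (shift 1 w)"
    unfolding gibbs_spec_def by simp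
qed

end

lemma part1:
  fixes phi :: "(int \<Rightarrow> 'e::finite) \<Rightarrow> real"
  assumes "cont_conf phi" "extensible phi"
  shows "is_specification (gibbs_spec phi) \<and> gibbsian (gibbs_spec phi) \<and> transl_inv (gibbs_spec phi)"
  using gs_spec[OF assms] gs_gibbsian[OF assms] gs_transl[OF assms] by blast



lemma telescope_int:
  fixes g :: "int \<Rightarrow> real"
  shows "(\<Sum>i\<in>{a..a + int k}. g i - g (i + 1)) = g a - g (a + int k + 1)"
proof (induction k)
  case 0 then show ?case by simp
next
  case (Suc k)
  have "{a..a + int (Suc k)} = insert (a + int k + 1) {a..a + int k}" by auto
  then show ?case using Suc by simp
qed

lemma telescope_sym:
  fixes g :: "int \<Rightarrow> real"
  shows "(\<Sum>i\<in>{- int n..int n}. g i - g (i + 1)) = g (- int n) - g (int n + 1)"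
  using telescope_int[of g "- int n" "2 * n"] by simp

lemma shift_up: "shift i (shift 1 w) = shift (i + 1) w"
  by (simp add: shift_shift)

context
  fixes gam :: "int set \<Rightarrow> (int \<Rightarrow> 'e::finite) \<Rightarrow> real" and a :: 'e
  assumes sp: "is_specification gam" and gb: "gibbsian gam" and ti: "transl_inv gam"
begin

lemma gpos: "finite L \<Longrightarrow> gam L w > 0"
proof -
  assume L: "finite L"
  have nn: "\<forall>w. gam L w \<ge> 0" using sp L unfolding is_specification_def by blast
  have "bdd_below (range (gam L))"
    by (rule bdd_belowI[of _ 0]) (use nn in auto)
  then have "(INF w. gam L w) \<le> gam L w" by (rule cINF_lower) simp
  moreover have "(INF w. gam L w) > 0" using gb L unfolding gibbsian_def by blast
  ultimately show ?thesis by linarith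
qed

lemma gcont: "finite L \<Longrightarrow> cont_conf (gam L)"
  using gb unfolding gibbsian_def by blast

lemma gsplit:
  assumes L: "finite L" and DL: "D \<subseteq> L"
  shows "gam L x = gam D x * (\<Sum>z\<in>configs_on D x. gam L z)"
proof -
  define f where "f z = (if z = x then 1 else 0 :: real)" for z
  have fin: "finite (configs_on L x)" using configs_finite[OF L] .
  have "(\<Sum>z\<in>configs_on L x. gam L z * spec_exp gam D f z) = spec_exp gam L f x"
    using sp L DL unfolding is_specification_def by blast
  also have "spec_exp gam L f x = gam L x"
  proof -
    show ?thesis unfolding spec_exp_def f_def using fin
      by (simp add: if_distrib[of "\<lambda>t. _ * t"] sum.delta cong: if_cong)
  qed
  also have "(\<Sum>z\<in>configs_on L x. gam L z * spec_exp gam D f z) =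
      (\<Sum>z\<in>configs_on L x. if z \<in> configs_on D x then gam D x * gam L z else 0)"
  proof (rule sum.cong[OF refl])
    fix z assume z: "z \<in> configs_on L x"
    have "finite D" using L DL finite_subset by blast
    then have fz: "finite (configs_on D z)" by (rule configs_finite)
    have "spec_exp gam D f z = (if x \<in> configs_on D z then gam D x else 0)"
      unfolding spec_exp_def f_def using fz
      by (simp add: if_distrib[of "\<lambda>t. _ * t"] sum.delta cong: if_cong)
    then show "gam L z * spec_exp gam D f z = (if z \<in> configs_on D x then gam D x * gam L z else 0)"
      by (simp add: configs_sym[of x D z] mult.commute)
  qed
  also have "\<dots> = (\<Sum>z\<in>configs_on L x \<inter> configs_on D x. gam D x * gam L z)"
    by (rule sum.inter_restrict[OF fin, symmetric])
  also have "configs_on L x \<inter> configs_on D x = configs_on D x"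
    using configs_sub[OF configs_self DL] by blast
  finally show ?thesis by (simp add: sum_distrib_left)
qed

lemma gdb:
  assumes L: "finite L" and DL: "D \<subseteq> L" and y: "y \<in> configs_on D x"
  shows "gam L x * gam D y = gam L y * gam D x"
proof -
  have "configs_on D y = configs_on D x" using configs_same[OF y] .
  then show ?thesis using gsplit[OF L DL, of x] gsplit[OF L DL, of y] by simp
qed

lemma lnr:
  assumes L: "finite L" and DL: "D \<subseteq> L" and y: "y \<in> configs_on D x"
  shows "ln (gam L x) - ln (gam L y) = ln (gam D x) - ln (gam D y)"
proof -
  have D: "finite D" using L DL finite_subset by blast
  have "ln (gam L x * gam D y) = ln (gam L y * gam D x)" using gdb[OF assms] by simp
  moreover have "ln (gam L x * gam D y) = ln (gam L x) + ln (gam D y)"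
    using gpos[OF L] gpos[OF D] by (rule ln_mult_pos; simp add: gpos L D)
  moreover have "ln (gam L y * gam D x) = ln (gam L y) + ln (gam D x)"
    using gpos[OF L] gpos[OF D] by (rule ln_mult_pos; simp add: gpos L D)
  ultimately show ?thesis by linarith
qed

lemma gshift1: "gam {i + 1} w = gam {i} (shift 1 w)"
  using ti unfolding transl_inv_def by (metis finite.emptyI finite.insertI image_empty image_insert)

lemma gshift: "gam {i} w = gam {0} (shift i w)"
proof (induction i arbitrary: w rule: int_induct[where k = 0])
  case base then show ?case by simp
next
  case (step1 i) then show ?case by (simp add: gshift1 shift_up)
next
  case (step2 i)
  have "gam {i - 1} w = gam {i - 1 + 1} (shift (-1) w)"
    using gshift1[of "i - 1" "shift (-1) w"] by (simp add: shift_shift)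
  also have "\<dots> = gam {0} (shift (i - 1) w)" using step2 by (simp add: shift_shift)
  finally show ?case .
qed

abbreviation "ph \<equiv> phi_of_spec a gam"

lemma ph_cont: "cont_conf ph"
proof -
  have eq: "ph = (\<lambda>w. ln (gam {0} (aleft a w)) - ln (gam {0} ((\<lambda>v. v(0 := a)) (aleft a w))))"
    unfolding phi_of_spec_def fun_eq_iff by (simp add: ln_divide_pos gpos)
  show ?thesis unfolding eq
    by (intro cont_diff cont_ln cont_comp[OF gcont] loc_aleft loc_comp[OF loc_upd] gpos) auto
qed

lemma ph_shift:
  assumes L: "finite L" "i \<in> L"
  shows "ph (shift i x) = ln (gam L (cut a i x)) - ln (gam L (cut a (i + 1) x))"
proof -
  have e1: "aleft a (shift i x) = shift i (cut a i x)"
    by (auto simp: aleft_def shift_def cut_def fun_eq_iff)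
  have e2: "(aleft a (shift i x))(0 := a) = shift i (cut a (i + 1) x)"
    by (auto simp: aleft_def shift_def cut_def fun_eq_iff)
  have "ph (shift i x) = ln (gam {i} (cut a i x)) - ln (gam {i} (cut a (i + 1) x))"
    unfolding phi_of_spec_def unfolding e2 unfolding e1 gshift[symmetric] by (simp add: ln_divide_pos gpos)
  also have "\<dots> = ln (gam L (cut a i x)) - ln (gam L (cut a (i + 1) x))"
    by (rule lnr[symmetric]) (use L in \<open>auto simp: configs_on_def cut_def\<close>)
  finally show ?thesis .
qed

lemma ph_sum:
  "(\<Sum>i\<in>{- int n..int n}. ph (shift i x)) =
     ln (gam {- int n..int n} (cut a (- int n) x)) - ln (gam {- int n..int n} (cut a (int n + 1) x))"
proof -
  have "(\<Sum>i\<in>{- int n..int n}. ph (shift i x)) =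
     (\<Sum>i\<in>{- int n..int n}. (\<lambda>j. ln (gam {- int n..int n} (cut a j x))) i - (\<lambda>j. ln (gam {- int n..int n} (cut a j x))) (i + 1))"
    by (intro sum.cong refl) (simp add: ph_shift)
  also have "\<dots> = ln (gam {- int n..int n} (cut a (- int n) x)) - ln (gam {- int n..int n} (cut a (int n + 1) x))"
    by (rule telescope_sym)
  finally show ?thesis .
qed

lemma ph_partial:
  assumes D: "finite D" "D \<subseteq> {- int n..int n}" and y: "y \<in> configs_on D x"
  shows "partial_sum ph x y n = ln (gam D (cut a (- int n) x)) - ln (gam D (cut a (- int n) y))"
proof -
  let ?L = "{- int n..int n}"
  have c: "cut a (int n + 1) x = cut a (int n + 1) y"
  proof (rule ext)
    fix k
    show "cut a (int n + 1) x k = cut a (int n + 1) y k"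
    proof (cases "k < int n + 1")
      case False
      then have "k \<notin> D" using D(2) by auto
      then show ?thesis using y False by (auto simp: cut_def configs_on_def)
    qed (simp add: cut_def)
  qed
  have "partial_sum ph x y n = (\<Sum>i\<in>?L. ph (shift i x)) - (\<Sum>i\<in>?L. ph (shift i y))"
    unfolding partial_sum_def by (simp add: sum_subtractf)
  also have "\<dots> = ln (gam ?L (cut a (- int n) x)) - ln (gam ?L (cut a (- int n) y))"
    unfolding ph_sum c by simp
  also have "\<dots> = ln (gam D (cut a (- int n) x)) - ln (gam D (cut a (- int n) y))"
    by (rule lnr) (use D y in \<open>auto simp: configs_on_def cut_def\<close>)
  finally show ?thesis .
qed

lemma ph_ext: "extensible ph"
  unfolding extensible_def
proof (intro allI)
  fix b c :: 'e
  define psi where "psi v = ln (gam {0} ((\<lambda>u. u(0 := b)) v)) - ln (gam {0} ((\<lambda>u. u(0 := c)) v))" for v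
  have eq: "partial_sum ph (w(0 := b)) (w(0 := c)) n = psi (cut a (- int n) w)" for w n
  proof -
    have "partial_sum ph (w(0 := b)) (w(0 := c)) n =
        ln (gam {0} (cut a (- int n) (w(0 := b)))) - ln (gam {0} (cut a (- int n) (w(0 := c))))"
      by (rule ph_partial) (auto simp: configs_on_def)
    moreover have "cut a (- int n) (w(0 := e)) = (cut a (- int n) w)(0 := e)" for e
      by (auto simp: cut_def fun_eq_iff)
    ultimately show ?thesis unfolding psi_def by simp
  qed
  have cpsi: "cont_conf psi"
    unfolding psi_def by (intro cont_diff cont_ln cont_comp[OF gcont] loc_upd gpos) auto
  have "ucs (\<lambda>n w. psi (cut a (- int n) w))"
    unfolding ucs_def
  proof (intro allI impI)
    fix e :: real assume "e > 0"
    then obtain N where N: "\<forall>x y. agree N x y \<longrightarrow> \<bar>psi x - psi y\<bar> < e"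
      using cont_unif[OF cpsi] by blast
    show "\<exists>N. \<forall>m\<ge>N. \<forall>n\<ge>N. \<forall>w. \<bar>psi (cut a (- int m) w) - psi (cut a (- int n) w)\<bar> < e"
    proof (intro exI[of _ N] allI impI)
      fix m n w assume "m \<ge> N" "n \<ge> N"
      then have "agree N (cut a (- int m) w) (cut a (- int n) w)"
        by (auto simp: agree_def cut_def)
      then show "\<bar>psi (cut a (- int m) w) - psi (cut a (- int n) w)\<bar> < e" using N by blast
    qed
  qed
  then show "uniformly_convergent_on UNIV (\<lambda>n w. partial_sum ph (w(0 := b)) (w(0 := c)) n)"
    unfolding ucs_iff_unif[symmetric] eq .
qed

lemma ph_rho:
  assumes L: "finite L" and x: "x \<in> configs_on L w"
  shows "rho ph x w = ln (gam L x) - ln (gam L w)"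
proof -
  obtain N0 where N0: "\<forall>i\<in>L. \<bar>i\<bar> \<le> int N0" using finite_int_bound[OF L] by blast
  have wx: "w \<in> configs_on L x" using x configs_sym by blast
  define chi where "chi v = ln (gam L v)" for v
  have cchi: "cont_conf chi" unfolding chi_def by (intro cont_ln gcont L gpos)
  have ev: "\<forall>\<^sub>F n in sequentially. partial_sum ph x w n = chi (cut a (- int n) x) - chi (cut a (- int n) w)"
    unfolding eventually_sequentially chi_def
  proof (intro exI[of _ N0] allI impI)
    fix n assume "n \<ge> N0"
    then have "L \<subseteq> {- int n..int n}" using N0 by force
    then show "partial_sum ph x w n = ln (gam L (cut a (- int n) x)) - ln (gam L (cut a (- int n) w))"
      by (intro ph_partial L wx)
  qed
  have ag: "agree n v (cut a (- int n) v)" for n v by (auto simp: agree_def cut_def)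
  have lim1: "(\<lambda>n. chi (cut a (- int n) v)) \<longlonglongrightarrow> chi v" for v
  proof (rule LIMSEQ_I)
    fix r :: real assume "r > 0"
    then obtain N where N: "\<forall>y. agree N v y \<longrightarrow> \<bar>chi y - chi v\<bar> < r"
      using cchi cont_local by blast
    show "\<exists>no. \<forall>n\<ge>no. norm (chi (cut a (- int n) v) - chi v) < r"
      by (intro exI[of _ N] allI impI) (use N agree_mono[OF ag] in auto)
  qed
  have "(\<lambda>n. chi (cut a (- int n) x) - chi (cut a (- int n) w)) \<longlonglongrightarrow> chi x - chi w"
    by (intro tendsto_diff lim1)
  then have "partial_sum ph x w \<longlonglongrightarrow> chi x - chi w"
    using tendsto_cong[OF ev] by blast
  then show ?thesis unfolding rho_def chi_def by (rule limI)
qed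

lemma ph_gibbs:
  assumes L: "finite L"
  shows "gibbs_spec ph L w = gam L w"
proof -
  have "(\<Sum>x\<in>configs_on L w. exp (rho ph x w)) = (\<Sum>x\<in>configs_on L w. gam L x / gam L w)"
    using ph_rho[OF L] gpos[OF L] by (intro sum.cong refl) (simp add: exp_diff)
  also have "\<dots> = 1 / gam L w"
    unfolding sum_divide_distrib[symmetric] using sp L unfolding is_specification_def by simp
  finally show ?thesis unfolding gibbs_spec_def by simp
qed

end

lemma part2:
  fixes gam :: "int set \<Rightarrow> (int \<Rightarrow> 'e::finite) \<Rightarrow> real" and a :: 'e
  assumes "is_specification gam" "gibbsian gam" "transl_inv gam"
  shows "cont_conf (phi_of_spec a gam) \<and> extensible (phi_of_spec a gam) \<and>
            (\<forall>L w. finite L \<longrightarrow> gibbs_spec (phi_of_spec a gam) L w = gam L w)"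
  using ph_cont[OF assms] ph_ext[OF assms] ph_gibbs[OF assms] by blast


theorem theorem4p2:
  fixes a :: "'e::finite"
  shows "(\<forall>phi :: (int \<Rightarrow> 'e) \<Rightarrow> real. cont_conf phi \<and> extensible phi \<longrightarrow>
            is_specification (gibbs_spec phi) \<and> gibbsian (gibbs_spec phi) \<and> transl_inv (gibbs_spec phi))
       \<and> (\<forall>gam :: int set \<Rightarrow> (int \<Rightarrow> 'e) \<Rightarrow> real.
            is_specification gam \<and> gibbsian gam \<and> transl_inv gam \<longrightarrow>
            cont_conf (phi_of_spec a gam) \<and> extensible (phi_of_spec a gam) \<and>
            (\<forall>L w. finite L \<longrightarrow> gibbs_spec (phi_of_spec a gam) L w = gam L w))"
  using part1 part2 by blast

end
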